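(* For all constants $a_1,b_1,a_2,b_2>0$, with $C_1,C_2$ as defined in the context, $\sup_{\omega\ge0}|C_1(j\omega)C_2(j\omega)|\le 1$.
   Context: For constants $a_1,b_1,a_2,b_2>0$ and complex $s$, set $p_1(s)=a_1+b_1 s$, $p_2(s)=a_2+b_2 s$, $q=p_1+p_2$, and $m(s)=(s^2+q)\sqrt{1-\frac{4p_1p_2}{(s^2+q)^2}}$ with $\sqrt{\cdot}$ the principal complex square root (nonnegative real part), so $m^2=(s^2+q)^2-4p_1p_2$. Define $C_1=\frac{(s^2+q)-m}{2p_2}$ and $C_2=\frac{(s^2+q)-m}{2p_1}$. $j$ denotes the imaginary unit. *)

theory Defs
  imports Complex_Main "HOL-Library.Extended_Real"
begin

definition p1 :: "real \<Rightarrow> real \<Rightarrow> complex \<Rightarrow> complex" where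
  "p1 a1 b1 s = of_real a1 + of_real b1 * s"

definition p2 :: "real \<Rightarrow> real \<Rightarrow> complex \<Rightarrow> complex" where
  "p2 a2 b2 s = of_real a2 + of_real b2 * s"

definition qq :: "real \<Rightarrow> real \<Rightarrow> real \<Rightarrow> real \<Rightarrow> complex \<Rightarrow> complex" where
  "qq a1 b1 a2 b2 s = p1 a1 b1 s + p2 a2 b2 s"

definition mm :: "real \<Rightarrow> real \<Rightarrow> real \<Rightarrow> real \<Rightarrow> complex \<Rightarrow> complex" where
  "mm a1 b1 a2 b2 s =
     (s^2 + qq a1 b1 a2 b2 s) *
     csqrt (1 - 4 * p1 a1 b1 s * p2 a2 b2 s / (s^2 + qq a1 b1 a2 b2 s)^2)"

definition C1 :: "real \<Rightarrow> real \<Rightarrow> real \<Rightarrow> real \<Rightarrow> complex \<Rightarrow> complex" where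
  "C1 a1 b1 a2 b2 s = ((s^2 + qq a1 b1 a2 b2 s) - mm a1 b1 a2 b2 s) / (2 * p2 a2 b2 s)"

definition C2 :: "real \<Rightarrow> real \<Rightarrow> real \<Rightarrow> real \<Rightarrow> complex \<Rightarrow> complex" where
  "C2 a1 b1 a2 b2 s = ((s^2 + qq a1 b1 a2 b2 s) - mm a1 b1 a2 b2 s) / (2 * p1 a1 b1 s)"

end

theory Submission
  imports Defs
begin

lemma norm_1mw: fixes w :: complex assumes "Re w \<ge> 0" shows "cmod (1 - w) \<le> cmod (1 + w)"
proof -
  have "cmod (1 - w)^2 \<le> cmod (1 + w)^2"
  proof -
    have "cmod (1 - w)^2 = (1 - Re w)^2 + (Im w)^2" by (simp add: cmod_power2)
    also have "\<dots> \<le> (1 + Re w)^2 + (Im w)^2" using assms by (simp add: power2_eq_square algebra_simps)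
    also have "\<dots> = cmod (1 + w)^2" by (simp add: cmod_power2)
    finally show ?thesis .
  qed
  thus ?thesis by (rule power2_le_imp_le) simp
qed

lemma key:
  fixes A P :: complex
  assumes "A \<noteq> 0"
  shows "cmod (A - A * csqrt (1 - 4*P/A^2))^2 \<le> cmod (4*P)"
proof -
  define w where "w = csqrt (1 - 4*P/A^2)"
  have w2: "w^2 = 1 - 4*P/A^2" unfolding w_def by simp
  have rw: "Re w \<ge> 0" unfolding w_def by (rule Re_csqrt)
  have prod: "(A - A*w) * (A + A*w) = 4*P"
  proof -
    have "(A - A*w) * (A + A*w) = A^2 * (1 - w^2)" by (simp add: algebra_simps power2_eq_square)
    also have "\<dots> = A^2 * (4*P/A^2)" by (simp add: w2)
    also have "\<dots> = 4*P" using assms by simp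
    finally show ?thesis .
  qed
  have "cmod (A - A*w) \<le> cmod (A + A*w)"
  proof -
    have "cmod (A - A*w) = cmod A * cmod (1 - w)" 
    proof -
      have "A - A*w = A*(1-w)" by (simp add: algebra_simps)
      thus ?thesis by (simp only: norm_mult)
    qed
    also have "\<dots> \<le> cmod A * cmod (1 + w)" using norm_1mw[OF rw] by (simp add: mult_left_mono)
    also have "\<dots> = cmod (A + A*w)" 
    proof -
      have "A + A*w = A*(1+w)" by (simp add: algebra_simps)
      thus ?thesis by (simp only: norm_mult)
    qed
    finally show ?thesis .
  qed
  hence "cmod (A - A*w)^2 \<le> cmod (A - A*w) * cmod (A + A*w)"
    by (simp add: power2_eq_square mult_left_mono)
  also have "\<dots> = cmod (4*P)" by (simp only: norm_mult[symmetric] prod)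
  finally show ?thesis unfolding w_def .
qed

lemma pointwise:
  fixes a1 b1 a2 b2 \<omega> :: real
  assumes "a1 > 0" "a2 > 0"
  shows "cmod (C1 a1 b1 a2 b2 (\<i> * of_real \<omega>) * C2 a1 b1 a2 b2 (\<i> * of_real \<omega>)) \<le> 1"
proof -
  define s where "s = \<i> * complex_of_real \<omega>"
  define A where "A = s^2 + qq a1 b1 a2 b2 s"
  define P1 where "P1 = p1 a1 b1 s"
  define P2 where "P2 = p2 a2 b2 s"
  have P1: "P1 \<noteq> 0"
  proof
    assume "P1 = 0"
    hence "Re P1 = 0" by simp
    moreover have "Re P1 = a1" unfolding P1_def p1_def s_def by simp
    ultimately show False using assms by simp
  qed
  have P2: "P2 \<noteq> 0"
  proof
    assume "P2 = 0"
    hence "Re P2 = 0" by simp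
    moreover have "Re P2 = a2" unfolding P2_def p2_def s_def by simp
    ultimately show False using assms by simp
  qed
  define M where "M = mm a1 b1 a2 b2 s"
  have m: "M = A * csqrt (1 - 4*(P1*P2)/A^2)"
    unfolding M_def mm_def A_def P1_def P2_def by (simp only: mult.assoc)
  have c1: "C1 a1 b1 a2 b2 s = (A - M) / (2*P2)"
    unfolding C1_def A_def M_def P2_def by (rule refl)
  have c2: "C2 a1 b1 a2 b2 s = (A - M) / (2*P1)"
    unfolding C2_def A_def M_def P1_def by (rule refl)
  have C: "C1 a1 b1 a2 b2 s * C2 a1 b1 a2 b2 s = (A - M)^2 / (4*(P1*P2))"
    unfolding c1 c2 by (simp add: power2_eq_square)
  show ?thesis
  proof (cases "A = 0")
    case True
    thus ?thesis unfolding s_def[symmetric] C m by simp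
  next
    case False
    have pos: "cmod (4*(P1*P2)) > 0" using P1 P2 by simp
    have "cmod (C1 a1 b1 a2 b2 s * C2 a1 b1 a2 b2 s) = cmod (A - M)^2 / cmod (4*(P1*P2))"
      unfolding C by (simp add: norm_divide norm_power)
    also have "\<dots> \<le> 1"
    proof -
      have k: "cmod (A - M)^2 \<le> cmod (4*(P1*P2))"
        unfolding m by (rule key[OF False])
      show ?thesis using k pos by (simp add: divide_le_eq_1)
    qed
    finally show ?thesis unfolding s_def .
  qed
qed

theorem lemma2:
  fixes a1 b1 a2 b2 :: real
  assumes "a1 > 0" "b1 > 0" "a2 > 0" "b2 > 0"
  shows "(SUP \<omega>\<in>{0::real..}.
            ereal (cmod (C1 a1 b1 a2 b2 (\<i> * of_real \<omega>) * C2 a1 b1 a2 b2 (\<i> * of_real \<omega>)))) \<le> 1"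
proof (rule SUP_least)
  fix \<omega> :: real
  show "ereal (cmod (C1 a1 b1 a2 b2 (\<i> * of_real \<omega>) * C2 a1 b1 a2 b2 (\<i> * of_real \<omega>))) \<le> 1"
    using pointwise[OF assms(1,3), of b1 b2 \<omega>] by simp
qed

end
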